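(* Let $s\geq 2$ and let $G$ be either $G_{(s,0)}$ or $G_{(s,s)}$, acting faithfully and transitively on a set of $n$ points. Let $T=\langle u,v\rangle$ if $G=G_{(s,0)}$ and $T=\langle g,h\rangle$ if $G=G_{(s,s)}$. If $T$ is transitive, then $G=G_{(s,0)}$ and $n=s^2$.
   Context: $G_{(s,0)}$ is the Coxeter group $[3,3,3]=\langle\rho_0,\rho_1,\rho_2\mid \rho_i^2=1,\ (\rho_i\rho_j)^3=1\ (i\neq j)\rangle$ factored by $(\rho_0\rho_1\rho_2\rho_1)^s$ (group of the toroidal hypermap $(3,3,3)_{(s,0)}$); $G_{(s,s)}$ is $[3,3,3]$ factored by $(\rho_0\rho_1\rho_2)^{2s}$ (group of $(3,3,3)_{(s,s)}$). Translations: $u=\rho_0\rho_1\rho_2\rho_1$, $v=\rho_1 u\rho_1=\rho_1\rho_0\rho_1\rho_2$; $g=(\rho_0\rho_1\rho_2)^2$, $h=\rho_0 g\rho_0$. In each case $T$ is a normal abelian subgroup (the translation subgroup) of order $s^2$. *)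

theory Defs
  imports "HOL-Algebra.Sym_Groups" "HOL-Algebra.Generated_Groups"
begin

text \<open>Generators rho_0, rho_1, rho_2 of the Coxeter group [3,3,3]; words in them.\<close>
datatype gen = R0 | R1 | R2

type_synonym word = "gen list"

definition wpow :: "word \<Rightarrow> nat \<Rightarrow> word" where
  "wpow w k = concat (replicate k w)"

definition coxeter333_rels :: "word set" where
  "coxeter333_rels = {[a, a] | a. True} \<union> {wpow [a, b] 3 | a b. a \<noteq> b}"

definition G_s0_rels :: "nat \<Rightarrow> word set" where
  "G_s0_rels s = coxeter333_rels \<union> {wpow [R0, R1, R2, R1] s}"

definition G_ss_rels :: "nat \<Rightarrow> word set" where
  "G_ss_rels s = coxeter333_rels \<union> {wpow [R0, R1, R2] (2 * s)}"

text \<open>Equality in the group presented by the generators and the relators R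
  (all generators are involutions, so the monoid congruence generated by
  r = [] for r in R is the group presentation).\<close>
inductive word_eq :: "word set \<Rightarrow> word \<Rightarrow> word \<Rightarrow> bool" for R where
  refl: "word_eq R w w"
| sym: "word_eq R w w' \<Longrightarrow> word_eq R w' w"
| trans: "word_eq R w1 w2 \<Longrightarrow> word_eq R w2 w3 \<Longrightarrow> word_eq R w1 w3"
| rel: "r \<in> R \<Longrightarrow> word_eq R (a @ r @ b) (a @ b)"

definition word_eval :: "(gen \<Rightarrow> nat \<Rightarrow> nat) \<Rightarrow> word \<Rightarrow> nat \<Rightarrow> nat" where
  "word_eval rep w = foldr (\<lambda>a f. rep a \<circ> f) w id"

definition faithful_action :: "word set \<Rightarrow> nat \<Rightarrow> (gen \<Rightarrow> nat \<Rightarrow> nat) \<Rightarrow> bool" where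
  "faithful_action R n rep \<longleftrightarrow>
     (\<forall>a. rep a permutes {1..n}) \<and>
     (\<forall>w w'. word_eval rep w = word_eval rep w' \<longleftrightarrow> word_eq R w w')"

definition transitive_on :: "nat \<Rightarrow> (nat \<Rightarrow> nat) set \<Rightarrow> bool" where
  "transitive_on n P \<longleftrightarrow> (\<forall>x\<in>{1..n}. \<forall>y\<in>{1..n}. \<exists>p\<in>P. p x = y)"

definition u_word :: word where "u_word = [R0, R1, R2, R1]"
definition v_word :: word where "v_word = [R1, R0, R1, R2]"
definition g_word :: word where "g_word = wpow [R0, R1, R2] 2"
definition h_word :: word where "h_word = [R0] @ g_word @ [R0]"

datatype hypermap_kind = Kind_s0 | Kind_ss

definition kind_rels :: "hypermap_kind \<Rightarrow> nat \<Rightarrow> word set" where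
  "kind_rels k s = (case k of Kind_s0 \<Rightarrow> G_s0_rels s | Kind_ss \<Rightarrow> G_ss_rels s)"

definition kind_T_gens :: "hypermap_kind \<Rightarrow> word \<times> word" where
  "kind_T_gens k = (case k of Kind_s0 \<Rightarrow> (u_word, v_word) | Kind_ss \<Rightarrow> (g_word, h_word))"

end

theory Submission
  imports Defs
begin

definition meval :: "(gen \<Rightarrow> 'a \<Rightarrow> 'a) \<Rightarrow> word \<Rightarrow> 'a \<Rightarrow> 'a" where
  "meval m w = foldr (\<lambda>a f. m a \<circ> f) w id"

lemma meval_Nil[simp]: "meval m [] = id" by (simp add: meval_def)
lemma meval_Cons[simp]: "meval m (a#w) = m a \<circ> meval m w" by (simp add: meval_def)
lemma meval_append[simp]: "meval m (w@w') = meval m w \<circ> meval m w'"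
  by (induction w) auto
lemma word_eval_meval: "word_eval rep = meval rep"
  by (rule ext) (simp add: word_eval_def meval_def)
lemma wpow_Suc: "wpow w (Suc k) = w @ wpow w k" by (simp add: wpow_def)
lemma wpow_0[simp]: "wpow w 0 = []" by (simp add: wpow_def)
lemma meval_wpow: "meval m (wpow w k) = meval m w ^^ k"
proof (induction k)
  case 0 then show ?case by simp
next
  case (Suc k)
  have "meval m (wpow w (Suc k)) = meval m w \<circ> meval m (wpow w k)" by (simp add: wpow_Suc)
  also have "\<dots> = meval m w ^^ Suc k" using Suc by simp
  finally show ?case .
qed

lemma word_eq_ctx: "word_eq R w w' \<Longrightarrow> word_eq R (x@w@y) (x@w'@y)"
proof (induction rule: word_eq.induct)
  case (refl w) then show ?case by (rule word_eq.refl)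
next
  case (sym w w') then show ?case by (metis word_eq.sym)
next
  case (trans w1 w2 w3) then show ?case by (metis word_eq.trans)
next
  case (rel r a b)
  from word_eq.rel[OF rel, of "x@a" "b@y"] show ?case by simp
qed

lemma word_eq_cancel: "coxeter333_rels \<subseteq> R \<Longrightarrow> word_eq R (x@[p,p]@y) (x@y)"
  by (rule word_eq.rel) (auto simp: coxeter333_rels_def)

lemma word_eq_braid0:
  assumes R: "coxeter333_rels \<subseteq> R" and pq: "p \<noteq> q"
  shows "word_eq R [p,q,p] [q,p,q]"
proof -
  have r: "wpow [p,q] 3 \<in> R" using R pq by (auto simp: coxeter333_rels_def)
  have "wpow [p,q] 3 = [p,q,p,q,p,q]" by (simp add: wpow_def numeral_3_eq_3)
  have 1: "word_eq R ([]@wpow [p,q] 3@[q,p,q]) ([]@[q,p,q])" by (rule word_eq.rel[OF r])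
  have 2: "word_eq R ([p,q,p,q,p]@[q,q]@[p,q]) ([p,q,p,q,p]@[p,q])" by (rule word_eq_cancel[OF R])
  have 3: "word_eq R ([p,q,p,q]@[p,p]@[q]) ([p,q,p,q]@[q])" by (rule word_eq_cancel[OF R])
  have 4: "word_eq R ([p,q,p]@[q,q]@[]) ([p,q,p]@[])" by (rule word_eq_cancel[OF R])
  have 1: "word_eq R [p,q,p,q,p,q,q,p,q] [q,p,q]" using 1 by (simp add: wpow_def numeral_3_eq_3)
  have 2: "word_eq R [p,q,p,q,p,q,q,p,q] [p,q,p,q,p,p,q]" using 2 by simp
  have 3: "word_eq R [p,q,p,q,p,p,q] [p,q,p,q,q]" using 3 by simp
  have 4: "word_eq R [p,q,p,q,q] [p,q,p]" using 4 by simp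
  have "word_eq R [p,q,p,q,p,q,q,p,q] [p,q,p]" using 2 3 4 word_eq.trans by blast
  then show ?thesis using 1 word_eq.trans word_eq.sym by blast
qed

lemma word_eq_braid:
  "coxeter333_rels \<subseteq> R \<Longrightarrow> p \<noteq> q \<Longrightarrow> word_eq R (x@[p,q,p]@y) (x@[q,p,q]@y)"
  by (rule word_eq_ctx) (rule word_eq_braid0)

datatype stp = D nat | I nat gen | B nat

fun stepw :: "stp \<Rightarrow> word \<Rightarrow> word option" where
  "stepw (D i) w = (if i+1 < length w \<and> w!i = w!(i+1) then Some (take i w @ drop (i+2) w) else None)"
| "stepw (I i a) w = (if i \<le> length w then Some (take i w @ [a,a] @ drop i w) else None)"
| "stepw (B i) w = (if i+2 < length w \<and> w!i = w!(i+2) \<and> w!i \<noteq> w!(i+1)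
      then Some (take i w @ [w!(i+1), w!i, w!(i+1)] @ drop (i+3) w) else None)"

fun run :: "stp list \<Rightarrow> word \<Rightarrow> word option" where
  "run [] w = Some w"
| "run (st#sts) w = (case stepw st w of None \<Rightarrow> None | Some w' \<Rightarrow> run sts w')"

lemma stepw_sound:
  assumes R: "coxeter333_rels \<subseteq> R" and st: "stepw st w = Some w'"
  shows "word_eq R w w'"
proof (cases st)
  case (D i)
  with st have c: "i+1 < length w" "w!i = w!(i+1)" and w': "w' = take i w @ drop (i+2) w"
    by (auto split: if_splits)
  have d1: "drop (i+1) w = w!(i+1) # drop (i+2) w"
    using Cons_nth_drop_Suc[of "i+1" w] c by simp
  have d0: "drop i w = w!i # drop (i+1) w"
    using Cons_nth_drop_Suc[of i w] c by simp
  have "w = take i w @ drop i w" by simp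
  also have "\<dots> = take i w @ [w!i, w!i] @ drop (i+2) w" using d0 d1 c by simp
  finally have "w = take i w @ [w!i, w!i] @ drop (i+2) w" .
  then show ?thesis using word_eq_cancel[OF R, of "take i w" "w!i" "drop (i+2) w"] w' by simp
next
  case (I i a)
  with st have c: "i \<le> length w" and w': "w' = take i w @ [a,a] @ drop i w"
    by (auto split: if_splits)
  show ?thesis using word_eq.sym[OF word_eq_cancel[OF R, of "take i w" a "drop i w"]] w' by simp
next
  case (B i)
  with st have c: "i+2 < length w" "w!i = w!(i+2)" "w!i \<noteq> w!(i+1)"
    and w': "w' = take i w @ [w!(i+1), w!i, w!(i+1)] @ drop (i+3) w"
    by (auto split: if_splits)
  have d2: "drop (i+2) w = w!(i+2) # drop (i+3) w"
    using Cons_nth_drop_Suc[of "i+2" w] c by (simp add: numeral_eq_Suc)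
  have d1: "drop (i+1) w = w!(i+1) # drop (i+2) w"
    using Cons_nth_drop_Suc[of "i+1" w] c by simp
  have d0: "drop i w = w!i # drop (i+1) w"
    using Cons_nth_drop_Suc[of i w] c by simp
  have "w = take i w @ drop i w" by simp
  also have "\<dots> = take i w @ [w!i, w!(i+1), w!i] @ drop (i+3) w" using d0 d1 d2 c by simp
  finally have "w = take i w @ [w!i, w!(i+1), w!i] @ drop (i+3) w" .
  then show ?thesis using word_eq_braid[OF R c(3), of "take i w" "drop (i+3) w"] w' by simp
qed

lemma run_sound: "coxeter333_rels \<subseteq> R \<Longrightarrow> run sts w = Some w' \<Longrightarrow> word_eq R w w'"
proof (induction sts arbitrary: w)
  case Nil then show ?case by (simp add: word_eq.refl)
next
  case (Cons st sts)
  then obtain w1 where 1: "stepw st w = Some w1" and 2: "run sts w1 = Some w'"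
    by (auto split: option.splits)
  show ?case using stepw_sound[OF Cons.prems(1) 1] Cons.IH[OF Cons.prems(1) 2] word_eq.trans by blast
qed

lemma meval_cong:
  assumes "\<And>a p q. N p = N q \<Longrightarrow> N (m a p) = N (m a q)"
  shows "N p = N q \<Longrightarrow> N (meval m w p) = N (meval m w q)"
proof (induction w arbitrary: p q)
  case Nil then show ?case by simp
next
  case (Cons a w)
  have "N (meval m w p) = N (meval m w q)" by (rule Cons.IH[OF Cons.prems])
  from assms[OF this, of a] show ?case by simp
qed

lemma model_inv:
  assumes cg: "\<And>a p q. N p = N q \<Longrightarrow> N (m a p) = N (m a q)"
    and rels: "\<And>r p. r \<in> R \<Longrightarrow> N (meval m r p) = N p"
  shows "word_eq R w w' \<Longrightarrow> N (meval m w p) = N (meval m w' p)"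
proof (induction arbitrary: p rule: word_eq.induct)
  case (rel r a b)
  have "N (meval m r (meval m b p)) = N (meval m b p)" by (rule rels[OF rel])
  then have "N (meval m a (meval m r (meval m b p))) = N (meval m a (meval m b p))"
    using meval_cong[of N m, OF cg] by blast
  then show ?case by simp
next
  case (refl w) then show ?case by simp
next
  case (sym w w') then show ?case by metis
next
  case (trans w1 w2 w3) then show ?case by metis
qed

fun m0 :: "gen \<Rightarrow> int \<times> int \<Rightarrow> int \<times> int" where
  "m0 R0 (x,y) = (1 - y, 1 - x)"
| "m0 R1 (x,y) = (y - x, y)"
| "m0 R2 (x,y) = (x, x - y)"

definition N0 :: "nat \<Rightarrow> int \<times> int \<Rightarrow> int \<times> int" where
  "N0 s p = (fst p mod int s, snd p mod int s)"

lemma m0_cong: "N0 s p = N0 s q \<Longrightarrow> N0 s (m0 a p) = N0 s (m0 a q)"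
  apply (cases a; cases p; cases q)
  apply (simp_all add: N0_def)
  apply (metis mod_diff_cong)+
  done

lemma m0_u: "meval m0 u_word p = (fst p + 1, snd p + 1)"
  by (cases p) (simp add: u_word_def)
lemma m0_v: "meval m0 v_word p = (fst p, snd p + 1)"
  by (cases p) (simp add: v_word_def)
lemma m0_upow: "meval m0 (wpow u_word i) p = (fst p + int i, snd p + int i)"
  by (induction i arbitrary: p) (auto simp: wpow_Suc m0_u)
lemma m0_vpow: "meval m0 (wpow v_word i) p = (fst p, snd p + int i)"
  by (induction i arbitrary: p) (auto simp: wpow_Suc m0_v)

lemma coxeter_cases: "r \<in> coxeter333_rels \<Longrightarrow> (\<exists>a. r = [a,a]) \<or> (\<exists>a b. a \<noteq> b \<and> r = [a,b,a,b,a,b])"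
  by (auto simp: coxeter333_rels_def wpow_def numeral_3_eq_3)

lemma m0_cox: "r \<in> coxeter333_rels \<Longrightarrow> meval m0 r p = p"
  apply (drule coxeter_cases)
  apply (cases p)
  apply (elim disjE exE conjE)
   apply (rename_tac a, case_tac a, auto)[1]
  apply (rename_tac a b, case_tac a; case_tac b; auto)
  done

lemma m0_rels: "r \<in> G_s0_rels s \<Longrightarrow> N0 s (meval m0 r p) = N0 s p"
proof -
  assume "r \<in> G_s0_rels s"
  then consider "r \<in> coxeter333_rels" | "r = wpow u_word s" by (auto simp: G_s0_rels_def u_word_def)
  then show ?thesis
  proof cases
    case 1 then show ?thesis by (simp add: m0_cox)
  next
    case 2 then show ?thesis by (simp add: m0_upow N0_def)
  qed
qed

fun m3 :: "gen \<Rightarrow> int \<Rightarrow> int" where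
  "m3 R0 x = 2 - x"
| "m3 R1 x = - x"
| "m3 R2 x = - x"

definition N3 :: "int \<Rightarrow> int" where "N3 x = x mod 3"

lemma m3_cong: "N3 p = N3 q \<Longrightarrow> N3 (m3 a p) = N3 (m3 a q)"
  by (cases a) (simp_all add: N3_def, (metis mod_diff_cong mod_minus_cong)+)

lemma mod3_6: "(6 + p) mod 3 = (p::int) mod 3" "(p - 6) mod 3 = (p::int) mod 3" by presburger+

lemma m3_cox: "r \<in> coxeter333_rels \<Longrightarrow> N3 (meval m3 r p) = N3 p"
  apply (drule coxeter_cases)
  apply (elim disjE exE conjE)
   apply (rename_tac a, case_tac a, auto)[1]
  apply (rename_tac a b, case_tac a; case_tac b; auto simp: N3_def mod3_6)
  done

lemma m3_abc: "meval m3 [R0,R1,R2] ^^ 2 = id"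
  by (auto simp: numeral_2_eq_2)

lemma funpow_id_id: "(id::'a\<Rightarrow>'a) ^^ k = id"
  by (induction k) auto

lemma m3_rels: "r \<in> G_ss_rels s \<Longrightarrow> N3 (meval m3 r p) = N3 p"
proof -
  assume "r \<in> G_ss_rels s"
  then consider "r \<in> coxeter333_rels" | "r = wpow [R0,R1,R2] (2*s)" by (auto simp: G_ss_rels_def)
  then show ?thesis
  proof cases
    case 1 then show ?thesis by (rule m3_cox)
  next
    case 2
    have "meval m3 r = (meval m3 [R0,R1,R2] ^^ 2) ^^ s" using 2 by (simp only: meval_wpow funpow_mult mult.commute)
    also have "\<dots> = id" unfolding m3_abc by (rule funpow_id_id)
    finally have "meval m3 r = id" .
    then show ?thesis by simp
  qed
qed


lemma E_perm: "(\<And>a. rep a permutes S) \<Longrightarrow> meval rep w permutes S"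
  by (induction w) (auto intro: permutes_compose)

lemma funpow_perm: "f permutes S \<Longrightarrow> f ^^ k permutes S"
  by (induction k) (auto intro: permutes_compose permutes_id)

lemma reg_eq:
  assumes tr: "transitive_on n P" and x0: "x0 \<in> {1..n}"
    and f: "f permutes {1..n}" and g: "g permutes {1..n}"
    and cf: "\<forall>r\<in>P. f \<circ> r = r \<circ> f" and cg: "\<forall>r\<in>P. g \<circ> r = r \<circ> g"
    and e: "f x0 = g x0"
  shows "f = g"
proof
  fix y
  show "f y = g y"
  proof (cases "y \<in> {1..n}")
    case True
    then obtain r where r: "r \<in> P" "r x0 = y" using tr x0 unfolding transitive_on_def by blast
    have "f y = (f \<circ> r) x0" using r by simp
    also have "\<dots> = r (f x0)" using cf r by simp
    also have "\<dots> = r (g x0)" using e by simp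
    also have "\<dots> = (g \<circ> r) x0" using cg r by (metis comp_apply)
    also have "\<dots> = g y" using r by simp
    finally show ?thesis .
  next
    case False
    then show ?thesis using permutes_not_in[OF f] permutes_not_in[OF g] by simp
  qed
qed

lemma gen_carrier:
  "A \<subseteq> carrier (sym_group n) \<Longrightarrow> p \<in> generate (sym_group n) A \<Longrightarrow> p permutes {1..n}"
  using group.generate_in_carrier[OF sym_group_is_group] sym_group_carrier by blast

lemma gen_comm:
  assumes A: "A \<subseteq> carrier (sym_group n)" and c: "\<forall>a\<in>A. a \<circ> f = f \<circ> a"
    and p: "p \<in> generate (sym_group n) A"
  shows "p \<circ> f = f \<circ> p"
  using p
proof induction
  case one then show ?case by (simp add: sym_group_one)
next
  case (incl h) then show ?case using c by blast
next
  case (inv h)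
  have hc: "h \<in> carrier (sym_group n)" using inv A by blast
  then have hp: "h permutes {1..n}" by (simp add: sym_group_carrier)
  have i1: "inv' h \<circ> h = id" and i2: "h \<circ> inv' h = id" using permutes_inv_o[OF hp] by auto
  have hf: "h \<circ> f = f \<circ> h" using c inv by blast
  have "inv' h \<circ> f = inv' h \<circ> f \<circ> (h \<circ> inv' h)" using i2 by simp
  also have "\<dots> = inv' h \<circ> (h \<circ> f) \<circ> inv' h" using hf by (simp add: o_assoc)
  also have "\<dots> = f \<circ> inv' h" using i1 by (simp add: o_assoc)
  finally show ?case using sym_group_inv_equality[OF hc] by simp
next
  case (eng h1 h2)
  then have "h1 \<circ> h2 \<circ> f = f \<circ> (h1 \<circ> h2)" by (metis comp_assoc)
  then show ?case by (simp only: sym_group_mult)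
qed

lemma gen_abel:
  assumes A: "A \<subseteq> carrier (sym_group n)" and c: "\<forall>a\<in>A. \<forall>b\<in>A. a \<circ> b = b \<circ> a"
    and p: "p \<in> generate (sym_group n) A" and q: "q \<in> generate (sym_group n) A"
  shows "p \<circ> q = q \<circ> p"
proof -
  have "\<forall>a\<in>A. a \<circ> q = q \<circ> a"
  proof
    fix a assume a: "a \<in> A"
    have "q \<circ> a = a \<circ> q" by (rule gen_comm[OF A _ q]) (use c a in blast)
    then show "a \<circ> q = q \<circ> a" by simp
  qed
  then show ?thesis by (rule gen_comm[OF A _ p])
qed

lemma card_regular:
  assumes tr: "transitive_on n P" and perm: "\<forall>p\<in>P. p permutes {1..n}"
    and ab: "\<forall>p\<in>P. \<forall>q\<in>P. p \<circ> q = q \<circ> p" and n: "n \<ge> 1"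
  shows "card P = n"
proof -
  have x0: "(1::nat) \<in> {1..n}" using n by simp
  have "bij_betw (\<lambda>p. p 1) P {1..n}"
    unfolding bij_betw_def
  proof
    show "inj_on (\<lambda>p. p 1) P"
    proof
      fix p q assume pq: "p \<in> P" "q \<in> P" "p 1 = q 1"
      have cp: "\<forall>r\<in>P. p \<circ> r = r \<circ> p" using ab pq(1) by blast
      have cq: "\<forall>r\<in>P. q \<circ> r = r \<circ> q" using ab pq(2) by blast
      show "p = q" using reg_eq[OF tr x0 _ _ cp cq pq(3)] perm pq(1,2) by blast
    qed
    show "(\<lambda>p. p 1) ` P = {1..n}"
    proof
      show "(\<lambda>p. p 1) ` P \<subseteq> {1..n}"
      proof
        fix y assume "y \<in> (\<lambda>p. p 1) ` P"
        then obtain p where p: "p \<in> P" "y = p 1" by blast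
        have "p permutes {1..n}" using perm p(1) by blast
        then show "y \<in> {1..n}" using permutes_in_image[of p "{1..n}" 1] x0 p(2) by simp
      qed
      show "{1..n} \<subseteq> (\<lambda>p. p 1) ` P"
      proof
        fix y assume y: "y \<in> {1..n}"
        then obtain p where "p \<in> P" "p 1 = y" using tr x0 unfolding transitive_on_def by blast
        then show "y \<in> (\<lambda>p. p 1) ` P" by (metis imageI)
      qed
    qed
  qed
  then show ?thesis by (simp add: bij_betw_same_card)
qed


lemma funpow_mod: "f ^^ s = id \<Longrightarrow> f ^^ m = f ^^ (m mod s)"
proof -
  assume h: "f ^^ s = id"
  have "f ^^ m = f ^^ (m mod s + s * (m div s))" by simp
  also have "\<dots> = f ^^ (m mod s) \<circ> (f ^^ s) ^^ (m div s)" by (simp only: funpow_add funpow_mult)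
  also have "\<dots> = f ^^ (m mod s)" by (simp add: h funpow_id_id)
  finally show ?thesis .
qed

lemma funpow_comm1: "f \<circ> g = g \<circ> f \<Longrightarrow> f \<circ> g ^^ j = g ^^ j \<circ> f"
proof (induction j)
  case 0 then show ?case by simp
next
  case (Suc j)
  have "f \<circ> g ^^ Suc j = (f \<circ> g) \<circ> g ^^ j" by (metis comp_assoc funpow.simps(2))
  also have "\<dots> = g \<circ> (f \<circ> g ^^ j)" using Suc.prems by (metis comp_assoc)
  also have "\<dots> = g ^^ Suc j \<circ> f" using Suc.IH[OF Suc.prems] by (metis comp_assoc funpow.simps(2))
  finally show ?case .
qed

lemma funpow_comm: "f \<circ> g = g \<circ> f \<Longrightarrow> f ^^ i \<circ> g ^^ j = g ^^ j \<circ> f ^^ i"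
proof (induction i)
  case 0 then show ?case by simp
next
  case (Suc i)
  have "f ^^ Suc i \<circ> g ^^ j = f \<circ> (f ^^ i \<circ> g ^^ j)" by (metis comp_assoc funpow.simps(2))
  also have "\<dots> = (f \<circ> g ^^ j) \<circ> f ^^ i" using Suc.IH[OF Suc.prems] by (metis comp_assoc)
  also have "\<dots> = g ^^ j \<circ> f ^^ Suc i" using funpow_comm1[OF Suc.prems] by (metis comp_assoc funpow.simps(2))
  finally show ?case .
qed

lemma gen_pow: "U \<in> generate (sym_group n) A \<Longrightarrow> U ^^ i \<in> generate (sym_group n) A"
proof (induction i)
  case 0 then show ?case using generate.one[of "sym_group n" A] by (simp only: sym_group_one funpow.simps(1))
next
  case (Suc i)
  then show ?case using generate.eng[of U "sym_group n" A "U ^^ i"] by (simp only: sym_group_mult funpow.simps(2))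
qed

lemma two_gen:
  assumes U: "U permutes {1..n}" and V: "V permutes {1..n}" and UV: "U \<circ> V = V \<circ> U"
    and Us: "U ^^ s = id" and Vs: "V ^^ s = id" and s: "s > 0"
  shows "generate (sym_group n) {U,V} = (\<lambda>(i,j). U ^^ i \<circ> V ^^ j) ` ({..<s} \<times> {..<s})"
proof
  define e where "e = (\<lambda>(i,j). U ^^ i \<circ> V ^^ j)"
  have inv_pow: "inv' W = W ^^ (s - 1)" if W: "W permutes {1..n}" "W ^^ s = id" for W
  proof -
    have "W \<circ> W ^^ (s - 1) = W ^^ s" using s by (metis Suc_diff_1 funpow.simps(2))
    then have 1: "W \<circ> W ^^ (s - 1) = id" using W by simp
    have "inv' W = inv' W \<circ> (W \<circ> W ^^ (s - 1))" using 1 by simp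
    also have "\<dots> = W ^^ (s - 1)" using permutes_inv_o(2)[OF W(1)] by (simp add: o_assoc)
    finally show ?thesis .
  qed
  have emul: "e (i,j) \<circ> e (i',j') = e ((i+i') mod s, (j+j') mod s)" for i j i' j'
  proof -
    have "e (i,j) \<circ> e (i',j') = U ^^ i \<circ> (V ^^ j \<circ> U ^^ i') \<circ> V ^^ j'" by (simp add: e_def o_assoc)
    also have "\<dots> = U ^^ i \<circ> (U ^^ i' \<circ> V ^^ j) \<circ> V ^^ j'" using funpow_comm[OF UV[symmetric]] by simp
    also have "\<dots> = U ^^ (i + i') \<circ> V ^^ (j + j')" by (simp add: funpow_add o_assoc)
    also have "\<dots> = e ((i+i') mod s, (j+j') mod s)"
      using funpow_mod[OF Us] funpow_mod[OF Vs] by (simp add: e_def)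
    finally show ?thesis .
  qed
  show "generate (sym_group n) {U,V} \<subseteq> e ` ({..<s} \<times> {..<s})"
  proof
    fix p assume "p \<in> generate (sym_group n) {U,V}"
    then show "p \<in> e ` ({..<s} \<times> {..<s})"
    proof induction
      case one
      have "e (0,0) = id" by (simp add: e_def)
      then show ?case using s by (metis sym_group_one image_eqI lessThan_iff mem_Sigma_iff)
    next
      case (incl h)
      have eU: "e (1 mod s, 0) = U" using funpow_mod[OF Us, of 1] by (simp add: e_def)
      have eV: "e (0, 1 mod s) = V" using funpow_mod[OF Vs, of 1] by (simp add: e_def)
      show ?case using incl eU eV s by (metis image_eqI insert_iff lessThan_iff mem_Sigma_iff
            mod_less_divisor singletonD)
    next
      case (inv h)
      have hc: "h \<in> carrier (sym_group n)" using inv U V by (auto simp: sym_group_carrier)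
      have eU: "e (s - 1, 0) = inv' U" using inv_pow[OF U Us] by (simp add: e_def)
      have eV: "e (0, s - 1) = inv' V" using inv_pow[OF V Vs] by (simp add: e_def)
      have "inv' h \<in> e ` ({..<s} \<times> {..<s})"
        using inv eU eV s by (metis diff_less image_eqI insert_iff lessThan_iff mem_Sigma_iff
            singletonD zero_less_one)
      then show ?case using sym_group_inv_equality[OF hc] by simp
    next
      case (eng h1 h2)
      then obtain i j i' j' where "h1 = e (i,j)" "h2 = e (i',j')" by auto
      then have "h1 \<otimes>\<^bsub>sym_group n\<^esub> h2 = e ((i+i') mod s, (j+j') mod s)"
        using emul by (simp add: sym_group_mult)
      then show ?case using s by auto
    qed
  qed
  show "e ` ({..<s} \<times> {..<s}) \<subseteq> generate (sym_group n) {U,V}"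
  proof
    fix p assume "p \<in> e ` ({..<s} \<times> {..<s})"
    then obtain i j where p: "p = U ^^ i \<circ> V ^^ j" by (auto simp: e_def)
    have "U ^^ i \<in> generate (sym_group n) {U,V}" by (rule gen_pow) (simp add: generate.incl)
    moreover have "V ^^ j \<in> generate (sym_group n) {U,V}" by (rule gen_pow) (simp add: generate.incl)
    ultimately show "p \<in> generate (sym_group n) {U,V}"
      using generate.eng[of "U ^^ i" "sym_group n" "{U,V}" "V ^^ j"] p by (simp add: sym_group_mult)
  qed
qed


lemma conj_pow: "W \<circ> W = id \<Longrightarrow> (W \<circ> U \<circ> W) ^^ k = W \<circ> U ^^ k \<circ> W"
proof (induction k)
  case 0 then show ?case by simp
next
  case (Suc k)
  have "(W \<circ> U \<circ> W) ^^ Suc k = (W \<circ> U \<circ> W) \<circ> (W \<circ> U ^^ k \<circ> W)"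
    using Suc by (simp only: funpow.simps(2))
  also have "\<dots> = W \<circ> U \<circ> (W \<circ> W) \<circ> U ^^ k \<circ> W" by (simp only: comp_assoc)
  also have "\<dots> = W \<circ> U ^^ Suc k \<circ> W" using Suc.prems by (simp only: funpow.simps(2) comp_assoc id_comp comp_id)
  finally show ?case .
qed

lemma Erev: "(\<And>a. rep a \<circ> rep a = id) \<Longrightarrow> meval rep (rev w) \<circ> meval rep w = id"
proof (induction w)
  case Nil then show ?case by simp
next
  case (Cons a w)
  have "meval rep (rev (a#w)) \<circ> meval rep (a#w) = meval rep (rev w) \<circ> (rep a \<circ> rep a) \<circ> meval rep w"
    by (simp add: comp_assoc)
  also have "\<dots> = id" by (simp only: Cons.prems comp_id Cons.IH[OF Cons.prems])
  finally show ?case .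
qed

lemma inv_left: "f permutes S \<Longrightarrow> g \<circ> f = id \<Longrightarrow> inv' f = g"
proof -
  assume f: "f permutes S" and g: "g \<circ> f = id"
  have "inv' f = (g \<circ> f) \<circ> inv' f" using g by simp
  also have "\<dots> = g \<circ> (f \<circ> inv' f)" by (simp only: comp_assoc)
  also have "\<dots> = g" using permutes_inv_o(1)[OF f] by simp
  finally show ?thesis .
qed


theorem mainTheorem5:
  fixes s n :: nat and k :: hypermap_kind and rep :: "gen \<Rightarrow> nat \<Rightarrow> nat"
  assumes "s \<ge> 2"
    and "faithful_action (kind_rels k s) n rep"
    and "transitive_on n (word_eval rep ` UNIV)"
    and "transitive_on n (generate (sym_group n)
           {word_eval rep (fst (kind_T_gens k)), word_eval rep (snd (kind_T_gens k))})"
  shows "k = Kind_s0 \<and> n = s ^ 2"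
proof -
  define R where "R = kind_rels k s"
  define E where "E = meval rep"
  have perm: "\<And>a. rep a permutes {1..n}" using assms(2) by (simp add: faithful_action_def)
  have feq: "\<And>w w'. E w = E w' \<longleftrightarrow> word_eq R w w'"
    using assms(2) by (simp add: faithful_action_def R_def E_def word_eval_meval)
  have Eperm: "\<And>w. E w permutes {1..n}" unfolding E_def by (rule E_perm[OF perm])
  have cox: "coxeter333_rels \<subseteq> R"
    by (cases k) (auto simp: R_def kind_rels_def G_s0_rels_def G_ss_rels_def)
  have weq: "\<And>w w'. word_eq R w w' \<Longrightarrow> E w = E w'" using feq by blast
  have rr: "\<And>a. rep a \<circ> rep a = id"
  proof -
    fix a
    have "word_eq R ([]@[a,a]@[]) ([]@[])" by (rule word_eq_cancel[OF cox])
    then have "E [a,a] = E []" using feq by (metis append_Nil append_Nil2)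
    then show "rep a \<circ> rep a = id" by (simp add: E_def)
  qed
  have carr: "\<And>w. E w \<in> carrier (sym_group n)" using Eperm by (simp add: sym_group_carrier)
  have uv: "E u_word \<circ> E v_word = E v_word \<circ> E u_word"
  proof -
    have "word_eq R (u_word @ v_word) (v_word @ u_word)"
      by (rule run_sound[OF cox, where sts="[D 3, I 0 R1, B 1, B 3, B 5]"]) (simp add: u_word_def v_word_def)
    then have "E (u_word @ v_word) = E (v_word @ u_word)" using feq by blast
    then show ?thesis by (simp add: E_def)
  qed
  have n0: "n \<ge> 1" if nt: "\<not> word_eq R [] [R0]"
  proof (rule ccontr)
    assume "\<not> n \<ge> 1"
    then have "n = 0" by simp
    then have "E [] = E [R0]" using Eperm[of "[]"] Eperm[of "[R0]"] by simp
    then show False using nt feq by blast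
  qed
  show ?thesis
  proof (cases k)
    case Kind_s0
    have R: "R = G_s0_rels s" by (simp add: R_def Kind_s0 kind_rels_def)
    define U where "U = E u_word"
    define V where "V = E v_word"
    have T: "transitive_on n (generate (sym_group n) {U, V})"
      using assms(4) by (simp add: Kind_s0 kind_T_gens_def U_def V_def E_def word_eval_meval)
    have Us: "U ^^ s = id"
    proof -
      have "word_eq R ([] @ wpow u_word s @ []) ([] @ [])"
        by (rule word_eq.rel) (simp add: R G_s0_rels_def u_word_def)
      then have "E (wpow u_word s) = E []" using feq by (metis append_Nil append_Nil2)
      then show ?thesis by (simp add: E_def U_def meval_wpow)
    qed
    have Vc: "V = rep R1 \<circ> U \<circ> rep R1"
    proof -
      have "word_eq R ([R1] @ u_word @ [R1]) v_word"
        by (rule run_sound[OF cox, where sts="[D 4]"]) (simp add: u_word_def v_word_def)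
      then have "E ([R1] @ u_word @ [R1]) = E v_word" using feq by blast
      then show ?thesis by (simp add: E_def U_def V_def comp_assoc)
    qed
    have Vs: "V ^^ s = id" unfolding Vc conj_pow[OF rr] Us by (simp add: rr)
    have s0: "s > 0" using assms(1) by simp
    define e where "e = (\<lambda>(i::nat, j::nat). U ^^ i \<circ> V ^^ j)"
    have Pe: "generate (sym_group n) {U, V} = e ` ({..<s} \<times> {..<s})"
      unfolding e_def by (rule two_gen[OF _ _ _ Us Vs s0]) (simp_all only: U_def V_def uv Eperm)
    have ew: "e (i,j) = E (wpow u_word i @ wpow v_word j)" for i j
      by (simp add: e_def E_def meval_wpow U_def V_def)
    have minv: "word_eq R w w' \<Longrightarrow> N0 s (meval m0 w p) = N0 s (meval m0 w' p)" for w w' p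
      by (rule model_inv[where N="N0 s" and m=m0 and R=R, OF m0_cong]) (simp_all add: R m0_rels)
    have inj: "inj_on e ({..<s} \<times> {..<s})"
    proof
      fix x y assume x: "x \<in> {..<s} \<times> {..<s}" and y: "y \<in> {..<s} \<times> {..<s}" and exy: "e x = e y"
      obtain i j where xi: "x = (i,j)" by (cases x)
      obtain i' j' where yi: "y = (i',j')" by (cases y)
      have "word_eq R (wpow u_word i @ wpow v_word j) (wpow u_word i' @ wpow v_word j')"
        using exy feq ew xi yi by metis
      from minv[OF this, of "(0,0)"]
      have h: "int i mod int s = int i' mod int s" "(int i + int j) mod int s = (int i' + int j') mod int s"
        by (simp_all add: m0_upow m0_vpow N0_def add.commute)
      have lt: "i < s" "j < s" "i' < s" "j' < s" using x y xi yi by auto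
      have ii: "i = i'" using h(1) lt by simp
      have "int j mod int s = ((int i + int j) mod int s - int i) mod int s" by (simp add: mod_diff_left_eq)
      also have "\<dots> = ((int i' + int j') mod int s - int i') mod int s" using h(2) ii by simp
      also have "\<dots> = int j' mod int s" by (simp add: mod_diff_left_eq)
      finally have "j = j'" using lt by simp
      then show "x = y" using xi yi ii by simp
    qed
    have cardP: "card (generate (sym_group n) {U, V}) = s * s"
      unfolding Pe by (simp add: card_image[OF inj] card_cartesian_product)
    have nt: "\<not> word_eq R [] [R0]"
    proof
      assume "word_eq R [] [R0]"
      from minv[OF this, of "(0,0)"] have "(1::int) mod int s = 0"
        by (simp add: N0_def)
      then show False using assms(1) by simp
    qed
    have A: "{U,V} \<subseteq> carrier (sym_group n)" using carr U_def V_def by blast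
    have ab: "\<forall>p\<in>generate (sym_group n) {U, V}. \<forall>q\<in>generate (sym_group n) {U, V}. p \<circ> q = q \<circ> p"
    proof -
      have cc: "\<forall>a\<in>{U,V}. \<forall>b\<in>{U,V}. a \<circ> b = b \<circ> a" using uv by (auto simp: U_def V_def)
      show ?thesis using gen_abel[OF A cc] by blast
    qed
    have pp: "\<forall>p\<in>generate (sym_group n) {U, V}. p permutes {1..n}" using gen_carrier[OF A] by blast
    have "card (generate (sym_group n) {U, V}) = n" by (rule card_regular[OF T pp ab n0[OF nt]])
    then show ?thesis using cardP Kind_s0 by (simp add: power2_eq_square)
  next
    case Kind_ss
    have R: "R = G_ss_rels s" by (simp add: R_def Kind_ss kind_rels_def)
    define U where "U = E u_word"
    define V where "V = E v_word"
    define U' where "U' = E [R1,R2,R1,R0]"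
    define Gg where "Gg = E g_word"
    define Hh where "Hh = E h_word"
    have T: "transitive_on n (generate (sym_group n) {Gg, Hh})"
      using assms(4) by (simp add: Kind_ss kind_T_gens_def Gg_def Hh_def E_def word_eval_meval)
    have minv: "word_eq R w w' \<Longrightarrow> N3 (meval m3 w p) = N3 (meval m3 w' p)" for w w' p
      by (rule model_inv[where N="N3" and m=m3 and R=R, OF m3_cong]) (simp_all add: R m3_rels)
    have nt: "\<not> word_eq R [] [R0]"
    proof
      assume "word_eq R [] [R0]"
      from minv[OF this, of 0] show False by (simp add: N3_def)
    qed
    have e1: "U' \<circ> U = id"
    proof -
      have "word_eq R ([R1,R2,R1,R0] @ u_word) []"
        by (rule run_sound[OF cox, where sts="[D 3, D 2, D 1, D 0]"]) (simp add: u_word_def)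
      then have "E ([R1,R2,R1,R0] @ u_word) = E []" using feq by blast
      then show ?thesis by (simp add: E_def U_def U'_def comp_assoc)
    qed
    have e2: "U \<circ> U' = id"
    proof -
      have "word_eq R (u_word @ [R1,R2,R1,R0]) []"
        by (rule run_sound[OF cox, where sts="[D 3, D 2, D 1, D 0]"]) (simp add: u_word_def)
      then have "E (u_word @ [R1,R2,R1,R0]) = E []" using feq by blast
      then show ?thesis by (simp add: E_def U_def U'_def comp_assoc)
    qed
    have eG: "Gg = U \<circ> V"
    proof -
      have "word_eq R (u_word @ v_word) g_word"
        by (rule run_sound[OF cox, where sts="[D 3]"]) (simp add: u_word_def v_word_def g_word_def wpow_def numeral_2_eq_2)
      then have "E (u_word @ v_word) = E g_word" using feq by blast
      then show ?thesis by (simp add: E_def U_def V_def Gg_def)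
    qed
    have eH: "Hh = U' \<circ> U' \<circ> V"
    proof -
      have "word_eq R h_word ([R1,R2,R1,R0] @ [R1,R2,R1,R0] @ v_word)"
        by (rule run_sound[OF cox, where sts="[D 0, I 2 R1, B 3, B 5, I 6 R1, I 7 R0, B 8]"])
          (simp add: h_word_def v_word_def g_word_def wpow_def numeral_2_eq_2)
      then have "E h_word = E ([R1,R2,R1,R0] @ [R1,R2,R1,R0] @ v_word)" using feq by blast
      then show ?thesis by (simp add: E_def U'_def V_def Hh_def comp_assoc)
    qed
    have c1: "\<And>x. U (V x) = V (U x)" using uv unfolding U_def V_def by (metis comp_apply)
    have c3: "\<And>x. U (U' x) = x" using e2 by (metis comp_apply id_apply)
    have c4: "\<And>x. U' (U x) = x" using e1 by (metis comp_apply id_apply)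
    have c2: "U' (V x) = V (U' x)" for x
    proof -
      have "U' (V x) = U' (V (U (U' x)))" by (simp only: c3)
      also have "\<dots> = U' (U (V (U' x)))" by (simp only: c1)
      also have "\<dots> = V (U' x)" by (simp only: c4)
      finally show ?thesis .
    qed
    have gh: "Gg \<circ> Hh = Hh \<circ> Gg" unfolding eG eH by (rule ext) (simp only: comp_apply c1 c2 c3 c4)
    have ug: "Gg \<circ> U = U \<circ> Gg" unfolding eG by (rule ext) (simp only: comp_apply c1 c2 c3 c4)
    have uh: "Hh \<circ> U = U \<circ> Hh" unfolding eH by (rule ext) (simp only: comp_apply c1 c2 c3 c4)
    define P where "P = generate (sym_group n) {Gg, Hh}"
    have A: "{Gg,Hh} \<subseteq> carrier (sym_group n)" using carr Gg_def Hh_def by blast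
    have ab: "\<forall>p\<in>P. \<forall>q\<in>P. p \<circ> q = q \<circ> p"
    proof -
      have cc: "\<forall>a\<in>{Gg,Hh}. \<forall>b\<in>{Gg,Hh}. a \<circ> b = b \<circ> a" using gh by auto
      show ?thesis unfolding P_def using gen_abel[OF A cc] by blast
    qed
    have uc: "\<forall>r\<in>P. U \<circ> r = r \<circ> U"
    proof
      fix r assume "r \<in> P"
      then have "r \<circ> U = U \<circ> r" unfolding P_def
        by (rule gen_comm[OF A, rotated]) (use ug uh in blast)
      then show "U \<circ> r = r \<circ> U" by simp
    qed
    have pp: "\<forall>p\<in>P. p permutes {1..n}" using gen_carrier[OF A] P_def by blast
    have x0: "(1::nat) \<in> {1..n}" using n0[OF nt] by simp
    have "U 1 \<in> {1..n}" using permutes_in_image[OF Eperm[of u_word]] x0 by (simp add: U_def)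
    then obtain p where p: "p \<in> P" "p 1 = U 1" using T x0 unfolding transitive_on_def P_def by blast
    have Up: "U permutes {1..n}" using Eperm[of u_word] by (simp only: U_def)
    have pp': "p permutes {1..n}" using pp p(1) by blast
    have pc: "\<forall>r\<in>P. p \<circ> r = r \<circ> p" using ab p(1) by blast
    have "U = p" by (rule reg_eq[OF T[folded P_def] x0 Up pp' uc pc p(2)[symmetric]])
    then have UP: "U \<in> P" using p by simp
    have model: "\<exists>w. q = E w \<and> (\<forall>x. N3 (meval m3 w x) = N3 x)" if "q \<in> P" for q
      using that unfolding P_def
    proof induction
      case one
      show ?case by (rule exI[of _ "[]"]) (simp add: sym_group_one E_def)
    next
      case (incl h)
      then show ?case
      proof
        assume "h = Gg" then show ?case
          by (intro exI[of _ g_word]) (simp add: Gg_def g_word_def wpow_def numeral_2_eq_2)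
      next
        assume "h \<in> {Hh}" then show ?case
          by (intro exI[of _ h_word]) (simp add: Hh_def h_word_def g_word_def wpow_def numeral_2_eq_2)
      qed
    next
      case (inv h)
      have ir: "inv\<^bsub>sym_group n\<^esub> (E w) = E (rev w)" for w
      proof -
        have "inv\<^bsub>sym_group n\<^esub> (E w) = inv' (E w)" using carr by simp
        also have "\<dots> = E (rev w)" by (rule inv_left[OF Eperm]) (simp add: E_def Erev rr)
        finally show ?thesis .
      qed
      from inv show ?case
      proof
        assume "h = Gg" then show ?case using ir[of g_word]
          by (intro exI[of _ "rev g_word"]) (simp add: Gg_def g_word_def wpow_def numeral_2_eq_2)
      next
        assume "h \<in> {Hh}" then show ?case using ir[of h_word]
          by (intro exI[of _ "rev h_word"]) (simp add: Hh_def h_word_def g_word_def wpow_def numeral_2_eq_2)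
      qed
    next
      case (eng h1 h2)
      then obtain w1 w2 where w: "h1 = E w1" "\<forall>x. N3 (meval m3 w1 x) = N3 x"
        "h2 = E w2" "\<forall>x. N3 (meval m3 w2 x) = N3 x" by blast
      have "\<forall>x. N3 (meval m3 (w1 @ w2) x) = N3 x"
      proof
        fix x
        have "N3 (meval m3 w1 (meval m3 w2 x)) = N3 (meval m3 w1 x)"
          by (rule meval_cong[of N3 m3, OF m3_cong w(4)[rule_format]])
        then show "N3 (meval m3 (w1 @ w2) x) = N3 x" using w(2) by simp
      qed
      moreover have "h1 \<otimes>\<^bsub>sym_group n\<^esub> h2 = E (w1 @ w2)" using w by (simp add: sym_group_mult E_def)
      ultimately show ?case by blast
    qed
    from model[OF UP] obtain w where w: "U = E w" "\<forall>x. N3 (meval m3 w x) = N3 x" by blast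
    have "E u_word = E w" using w(1) by (simp only: U_def)
    then have "word_eq R u_word w" using feq by simp
    from minv[OF this, of 0] have "N3 (meval m3 u_word 0) = N3 (meval m3 w 0)" .
    also have "\<dots> = N3 0" using w(2) by simp
    finally have False by (simp add: N3_def u_word_def)
    then show ?thesis ..
  qed
qed

end
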